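(* For every term $M$ of the CCV $\lambda\mu$-calculus, $[\![M]\!]^{-1}=_{ccv}M$.
   Context: CCV $\lambda\mu$-calculus. Ordinary variables $x,y,z,\dots$ and continuation variables $k,l,\dots$ are disjoint. Terms $M ::= x \mid \lambda x.M \mid MM \mid (M\ \mathsf{where}\ x:=M) \mid \mu k.J$, jumps $J ::= [k]M \mid (J\ \mathsf{where}\ x:=M)$, where $(L\ \mathsf{where}\ x:=M)$ means $\mathsf{let}\ x=M\ \mathsf{in}\ L$ ($x$ bound in $L$ only). Terms are identified up to $\alpha$-conversion and the congruence generated by (E1) $(L\ \mathsf{where}\ x:=(M\ \mathsf{where}\ y:=N))=((L\ \mathsf{where}\ x:=M)\ \mathsf{where}\ y:=N)$ if $y$ not free in $L$; (E2) $((\mu k.J)\ \mathsf{where}\ x:=M)=\mu k.(J\ \mathsf{where}\ x:=M)$ if $k$ not free in $M$; (E3) $[k](L\ \mathsf{where}\ x:=M)=([k]L\ \mathsf{where}\ x:=M)$. Values $V$: variables and $\lambda$-abstractions; $N$ a non-value. $=_{ccv}$ is the smallest congruence containing ($z$ fresh): $NM\to(zM\ \mathsf{where}\ z:=N)$; $VN\to(Vz\ \mathsf{where}\ z:=N)$; $(\lambda x.M)V\to(M\ \mathsf{where}\ x:=V)$; $(M\ \mathsf{where}\ x:=V)\to M\{V/x\}$; $(M\ \mathsf{where}\ x:=\mu k.J)\to\mu k.J\{[k]\square\mapsto[k](M\ \mathsf{where}\ x:=\square)\}$; $[l]\mu k.J\to J\{l/k\}$; $\lambda x.Vx\to V$ ($x$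 not free in $V$); $(x\ \mathsf{where}\ x:=M)\to M$; $\mu k.[k]M\to M$ ($k$ not free in $M$); the context substitution replaces recursively each subjump $[k]Q$ with $k$ free by $[k](M\ \mathsf{where}\ x:=Q)$, and $J\{l/k\}$ replaces each such $[k]Q$ by $[l]Q$. Target calculus: sorted $\lambda$-calculus $T::=\lambda k.Q\mid WW$, $Q::=KW\mid TK$, $W::=x\mid\lambda x.T$, $K::=k\mid\lambda x.Q$. CPS translation (fresh bound variables): $\langle V\rangle[K]=KV^*$; $\langle V_1V_2\rangle[K]=V_1^*V_2^*K$; $\langle VN\rangle[K]=\langle N\rangle[\lambda y.V^*yK]$; $\langle NV\rangle[K]=\langle N\rangle[\lambda x.xV^*K]$; $\langle N_1N_2\rangle[K]=\langle N_1\rangle[\lambda x.\langle N_2\rangle[\lambda y.xyK]]$; $\langle (L\ \mathsf{where}\ x:=M)\rangle[K]=\langle M\rangle[\lambda x.\langle L\rangle[K]]$ (renaming $x$ if free in $K$); $\langle\mu k.J\rangle[K]=(\lambda k.\langle J\rangle)K$; $\langle[k]M\rangle=\langle M\rangle[k]$; $\langle (J\ \mathsf{where}\ x:=M)\rangle=\langle M\rangle[\lambda x.\langle J\rangle]$; $x^*=x$; $(\lambda x.M)^*=\lambda xk.\langle M\rangle[k]$; $[\![M]\!]=\lambda k.\langle M\rangle[k]$, computed from any syntax-tree representative. Inverse translation: $(\lambda k.Q)^{-1}=\mu k.Q^{-1}$; $(W_1W_2)^{-1}=W_1^{-1}W_2^{-1}$; $(KW)^{-1}=K^{-1}[W^{-1}]$;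 $(TK)^{-1}=K^{-1}[T^{-1}]$; $x^{-1}=x$; $(\lambda x.T)^{-1}=\lambda x.T^{-1}$; $k^{-1}=[k]\square$; $(\lambda x.Q)^{-1}=(Q^{-1}\ \mathsf{where}\ x:=\square)$, where $K^{-1}$ is a jump with one hole $\square$ and $K^{-1}[M]$ fills it with $M$. *)

theory Defs
  imports Main
begin

text \<open>Ordinary variables and continuation variables live in two disjoint index spaces.
  Lam binds ordinary index 0; Where L M (= L where x:=M) binds ordinary index 0 in L only;
  Mu binds continuation index 0.  Alpha-equivalence is syntactic identity.\<close>

datatype trm =
    Var nat
  | Lam trm
  | App trm trm
  | Where trm trm
  | Mu jmp
and jmp =
    Jmp nat trm
  | JWhere jmp trm

fun is_val :: "trm \<Rightarrow> bool" where
  "is_val (Var x) = True"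
| "is_val (Lam M) = True"
| "is_val _ = False"

primrec oshift :: "nat \<Rightarrow> trm \<Rightarrow> trm" and oshiftJ :: "nat \<Rightarrow> jmp \<Rightarrow> jmp" where
  "oshift c (Var x) = Var (if c \<le> x then Suc x else x)"
| "oshift c (Lam M) = Lam (oshift (Suc c) M)"
| "oshift c (App M N) = App (oshift c M) (oshift c N)"
| "oshift c (Where L M) = Where (oshift (Suc c) L) (oshift c M)"
| "oshift c (Mu J) = Mu (oshiftJ c J)"
| "oshiftJ c (Jmp k M) = Jmp k (oshift c M)"
| "oshiftJ c (JWhere J M) = JWhere (oshiftJ (Suc c) J) (oshift c M)"

primrec kshift :: "nat \<Rightarrow> trm \<Rightarrow> trm" and kshiftJ :: "nat \<Rightarrow> jmp \<Rightarrow> jmp" where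
  "kshift c (Var x) = Var x"
| "kshift c (Lam M) = Lam (kshift c M)"
| "kshift c (App M N) = App (kshift c M) (kshift c N)"
| "kshift c (Where L M) = Where (kshift c L) (kshift c M)"
| "kshift c (Mu J) = Mu (kshiftJ (Suc c) J)"
| "kshiftJ c (Jmp k M) = Jmp (if c \<le> k then Suc k else k) (kshift c M)"
| "kshiftJ c (JWhere J M) = JWhere (kshiftJ c J) (kshift c M)"

text \<open>Capture-avoiding substitution \<open>M{N/j}\<close> of a term for ordinary index j
  (indices above j are decremented, as the binder disappears).\<close>
primrec subst :: "nat \<Rightarrow> trm \<Rightarrow> trm \<Rightarrow> trm" and substJ :: "nat \<Rightarrow> trm \<Rightarrow> jmp \<Rightarrow> jmp" where
  "subst j N (Var x) = (if x = j then N else if j < x then Var (x - 1) else Var x)"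
| "subst j N (Lam M) = Lam (subst (Suc j) (oshift 0 N) M)"
| "subst j N (App M1 M2) = App (subst j N M1) (subst j N M2)"
| "subst j N (Where L M) = Where (subst (Suc j) (oshift 0 N) L) (subst j N M)"
| "subst j N (Mu J) = Mu (substJ j (kshift 0 N) J)"
| "substJ j N (Jmp k M) = Jmp k (subst j N M)"
| "substJ j N (JWhere J M) = JWhere (substJ (Suc j) (oshift 0 N) J) (subst j N M)"

text \<open>Renaming \<open>J{l/k}\<close>: continuation index j replaced by l (indices above j decremented).\<close>
primrec kren :: "nat \<Rightarrow> nat \<Rightarrow> trm \<Rightarrow> trm" and krenJ :: "nat \<Rightarrow> nat \<Rightarrow> jmp \<Rightarrow> jmp" where
  "kren j l (Var x) = Var x"
| "kren j l (Lam M) = Lam (kren j l M)"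
| "kren j l (App M N) = App (kren j l M) (kren j l N)"
| "kren j l (Where L M) = Where (kren j l L) (kren j l M)"
| "kren j l (Mu J) = Mu (krenJ (Suc j) (Suc l) J)"
| "krenJ j l (Jmp k M) =
     Jmp (if k = j then l else if j < k then k - 1 else k) (kren j l M)"
| "krenJ j l (JWhere J M) = JWhere (krenJ j l J) (kren j l M)"

text \<open>Context substitution \<open>J{[k]\<box> \<mapsto> [k](N where x:=\<box>)}\<close>: kk is the (current) index of k,
  N the term plugged in, living in the current context extended by x (index 0).\<close>
primrec csubst :: "nat \<Rightarrow> trm \<Rightarrow> trm \<Rightarrow> trm" and csubstJ :: "nat \<Rightarrow> trm \<Rightarrow> jmp \<Rightarrow> jmp" where
  "csubst kk N (Var x) = Var x"
| "csubst kk N (Lam M) = Lam (csubst kk (oshift 1 N) M)"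
| "csubst kk N (App M1 M2) = App (csubst kk N M1) (csubst kk N M2)"
| "csubst kk N (Where L M) = Where (csubst kk (oshift 1 N) L) (csubst kk N M)"
| "csubst kk N (Mu J) = Mu (csubstJ (Suc kk) (kshift 0 N) J)"
| "csubstJ kk N (Jmp k Q) =
     (if k = kk then Jmp k (Where N (csubst kk N Q)) else Jmp k (csubst kk N Q))"
| "csubstJ kk N (JWhere J Q) = JWhere (csubstJ kk (oshift 1 N) J) (csubst kk N Q)"

inductive ccv :: "trm \<Rightarrow> trm \<Rightarrow> bool" and ccvJ :: "jmp \<Rightarrow> jmp \<Rightarrow> bool" where
  refl: "ccv M M"
| sym: "ccv M N \<Longrightarrow> ccv N M"
| trans: "ccv M N \<Longrightarrow> ccv N P \<Longrightarrow> ccv M P"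
| reflJ: "ccvJ J J"
| symJ: "ccvJ J J' \<Longrightarrow> ccvJ J' J"
| transJ: "ccvJ J J' \<Longrightarrow> ccvJ J' J'' \<Longrightarrow> ccvJ J J''"
| cLam: "ccv M M' \<Longrightarrow> ccv (Lam M) (Lam M')"
| cApp: "ccv M M' \<Longrightarrow> ccv N N' \<Longrightarrow> ccv (App M N) (App M' N')"
| cWhere: "ccv L L' \<Longrightarrow> ccv M M' \<Longrightarrow> ccv (Where L M) (Where L' M')"
| cMu: "ccvJ J J' \<Longrightarrow> ccv (Mu J) (Mu J')"
| cJmp: "ccv M M' \<Longrightarrow> ccvJ (Jmp k M) (Jmp k M')"
| cJWhere: "ccvJ J J' \<Longrightarrow> ccv M M' \<Longrightarrow> ccvJ (JWhere J M) (JWhere J' M')"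
  \<comment> \<open>(E1), for terms and jumps; y not free in L is expressed by shifting L\<close>
| E1: "ccv (Where L (Where M N)) (Where (Where (oshift 1 L) M) N)"
| E1J: "ccvJ (JWhere J (Where M N)) (JWhere (JWhere (oshiftJ 1 J) M) N)"
  \<comment> \<open>(E2); k not free in M is expressed by shifting M\<close>
| E2: "ccv (Where (Mu J) M) (Mu (JWhere J (kshift 0 M)))"
| E3: "ccvJ (Jmp k (Where L M)) (JWhere (Jmp k L) M)"
  \<comment> \<open>reduction rules (z fresh is expressed by shifting)\<close>
| r_NM: "\<not> is_val N \<Longrightarrow> ccv (App N M) (Where (App (Var 0) (oshift 0 M)) N)"
| r_VN: "is_val V \<Longrightarrow> \<not> is_val N \<Longrightarrow> ccv (App V N) (Where (App (oshift 0 V) (Var 0)) N)"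
| r_beta: "is_val V \<Longrightarrow> ccv (App (Lam M) V) (Where M V)"
| r_whereV: "is_val V \<Longrightarrow> ccv (Where M V) (subst 0 V M)"
| r_whereMu: "ccv (Where M (Mu J)) (Mu (csubstJ 0 (kshift 0 M) J))"
| r_jmpMu: "ccvJ (Jmp l (Mu J)) (krenJ 0 l J)"
| r_eta: "is_val V \<Longrightarrow> ccv (Lam (App (oshift 0 V) (Var 0))) V"
| r_whereVar: "ccv (Where (Var 0) M) M"
| r_muJmp: "ccv (Mu (Jmp 0 (kshift 0 M))) M"


text \<open>TLam binds continuation index 0; WLam and KLam bind ordinary index 0.\<close>
datatype tT = TLam tQ | TApp tW tW
and tQ = QK tK tW | QT tT tK
and tW = WVar nat | WLam tT
and tK = KVar nat | KLam tQ

primrec oshT :: "nat \<Rightarrow> tT \<Rightarrow> tT" and oshQ :: "nat \<Rightarrow> tQ \<Rightarrow> tQ"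
  and oshW :: "nat \<Rightarrow> tW \<Rightarrow> tW" and oshK :: "nat \<Rightarrow> tK \<Rightarrow> tK" where
  "oshT c (TLam Q) = TLam (oshQ c Q)"
| "oshT c (TApp W1 W2) = TApp (oshW c W1) (oshW c W2)"
| "oshQ c (QK K W) = QK (oshK c K) (oshW c W)"
| "oshQ c (QT T K) = QT (oshT c T) (oshK c K)"
| "oshW c (WVar x) = WVar (if c \<le> x then Suc x else x)"
| "oshW c (WLam T) = WLam (oshT (Suc c) T)"
| "oshK c (KVar k) = KVar k"
| "oshK c (KLam Q) = KLam (oshQ (Suc c) Q)"

lemma size_oshift[simp]: "size (oshift c M) = size M" "size (oshiftJ c J) = size J"
  by (induction M and J arbitrary: c and c) auto

lemma size_kshift[simp]: "size (kshift c M) = size M" "size (kshiftJ c J) = size J"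
  by (induction M and J arbitrary: c and c) auto

text \<open>\<open>cps M K\<close> is \<open>\<langle>M\<rangle>[K]\<close>, \<open>cpsJ J\<close> is \<open>\<langle>J\<rangle>\<close>, \<open>star V\<close> is \<open>V\<^sup>*\<close> (only meaningful on values).\<close>
function cps :: "trm \<Rightarrow> tK \<Rightarrow> tQ" and cpsJ :: "jmp \<Rightarrow> tQ" and star :: "trm \<Rightarrow> tW" where
  "cps (Var x) K = QK K (star (Var x))"
| "cps (Lam M) K = QK K (star (Lam M))"
| "cps (App M1 M2) K =
    (if is_val M1 \<and> is_val M2 then QT (TApp (star M1) (star M2)) K
     else if is_val M1 then
       cps M2 (KLam (QT (TApp (oshW 0 (star M1)) (WVar 0)) (oshK 0 K)))
     else if is_val M2 then
       cps M1 (KLam (QT (TApp (WVar 0) (oshW 0 (star M2))) (oshK 0 K)))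
     else
       cps M1 (KLam (cps (oshift 0 M2)
                       (KLam (QT (TApp (WVar 1) (WVar 0)) (oshK 0 (oshK 0 K)))))))"
| "cps (Where L M) K = cps M (KLam (cps L (oshK 0 K)))"
| "cps (Mu J) K = QT (TLam (cpsJ J)) K"
| "cpsJ (Jmp k M) = cps M (KVar k)"
| "cpsJ (JWhere J M) = cps M (KLam (cpsJ J))"
| "star (Var x) = WVar x"
| "star (Lam M) = WLam (TLam (cps (kshift 0 M) (KVar 0)))"
| "star (App M N) = undefined"
| "star (Where M N) = undefined"
| "star (Mu J) = undefined"
  by pat_completeness auto
termination
  by (relation "measure (case_sum (\<lambda>(M, K). 2 * size M + 1) (case_sum (\<lambda>J. 2 * size J + 1) (\<lambda>V. 2 * size V)))") auto

definition cps_top :: "trm \<Rightarrow> tT" where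
  "cps_top M = TLam (cps (kshift 0 M) (KVar 0))"

primrec invT :: "tT \<Rightarrow> trm" and invQ :: "tQ \<Rightarrow> jmp"
  and invW :: "tW \<Rightarrow> trm" and fillK :: "tK \<Rightarrow> trm \<Rightarrow> jmp" where
  "invT (TLam Q) = Mu (invQ Q)"
| "invT (TApp W1 W2) = App (invW W1) (invW W2)"
| "invQ (QK K W) = fillK K (invW W)"
| "invQ (QT T K) = fillK K (invT T)"
| "invW (WVar x) = Var x"
| "invW (WLam T) = Lam (invT T)"
| "fillK (KVar k) M = Jmp k M"
| "fillK (KLam Q) M = JWhere (invQ Q) M"

end

theory Submission imports Defs begin

lemma osh_comm:
  "d \<le> c \<Longrightarrow> oshift (Suc c) (oshift d M) = oshift d (oshift c M)"
  "d \<le> c \<Longrightarrow> oshiftJ (Suc c) (oshiftJ d J) = oshiftJ d (oshiftJ c J)"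
  by (induction M and J arbitrary: c d and c d) auto

lemma osh_ksh:
  "oshift c (kshift d M) = kshift d (oshift c M)"
  "oshiftJ c (kshiftJ d J) = kshiftJ d (oshiftJ c J)"
  by (induction M and J arbitrary: c d and c d) auto

lemma inv_osh:
  "invT (oshT c T) = oshift c (invT T)"
  "invQ (oshQ c Q) = oshiftJ c (invQ Q)"
  "invW (oshW c W) = oshift c (invW W)"
  "\<And>M. fillK (oshK c K) (oshift c M) = oshiftJ c (fillK K M)"
  by (induction T and Q and W and K arbitrary: c and c and c and c) auto

fun oshs :: "nat list \<Rightarrow> trm \<Rightarrow> trm" where
  "oshs [] M = M" | "oshs (c#cs) M = oshs cs (oshift c M)"
fun oshsJ :: "nat list \<Rightarrow> jmp \<Rightarrow> jmp" where
  "oshsJ [] M = M" | "oshsJ (c#cs) M = oshsJ cs (oshiftJ c M)"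

lemma isval_osh: "is_val (oshift c M) = is_val M" by (cases M) auto
lemma isval_oshs: "is_val (oshs cs M) = is_val M"
  by (induction cs arbitrary: M) (auto simp: isval_osh)

lemma oshs_simps[simp]:
  "oshs cs (Lam M) = Lam (oshs (map Suc cs) M)"
  "oshs cs (App M N) = App (oshs cs M) (oshs cs N)"
  "oshs cs (Where M N) = Where (oshs (map Suc cs) M) (oshs cs N)"
  "oshs cs (Mu J) = Mu (oshsJ cs J)"
  "oshsJ cs (Jmp k M) = Jmp k (oshs cs M)"
  "oshsJ cs (JWhere J M) = JWhere (oshsJ (map Suc cs) J) (oshs cs M)"
  by (induction cs arbitrary: M N J) auto

lemma oshs_var0: "oshs (map Suc cs) (Var 0) = Var 0"
  by (induction cs) auto

lemma oshs_osh0: "oshs (map Suc cs) (oshift 0 M) = oshift 0 (oshs cs M)"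
  by (induction cs arbitrary: M) (auto simp: osh_comm)

lemma oshsJ_osh1: "oshsJ (map (Suc \<circ> Suc) cs) (oshiftJ (Suc 0) J) = oshiftJ (Suc 0) (oshsJ (map Suc cs) J)"
  by (induction cs arbitrary: J) (auto simp: osh_comm)

lemma oshs_ksh: "oshs cs (kshift 0 M) = kshift 0 (oshs cs M)"
  by (induction cs arbitrary: M) (auto simp: osh_ksh)

definition R where "R X Y = (\<forall>cs. ccv (oshs cs X) (oshs cs Y))"
definition RJ where "RJ X Y = (\<forall>cs. ccvJ (oshsJ cs X) (oshsJ cs Y))"

lemma R_refl: "R X X" and RJ_refl: "RJ J J"
  by (auto simp: R_def RJ_def intro: ccv_ccvJ.intros)
lemma R_sym: "R X Y \<Longrightarrow> R Y X" and RJ_sym: "RJ J J' \<Longrightarrow> RJ J' J"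
  by (auto simp: R_def RJ_def intro: ccv_ccvJ.intros)
lemma R_trans: "R X Y \<Longrightarrow> R Y Z \<Longrightarrow> R X Z" and RJ_trans: "RJ J J' \<Longrightarrow> RJ J' J'' \<Longrightarrow> RJ J J''"
  by (auto simp: R_def RJ_def intro: ccv_ccvJ.intros)

lemma R_Lam: "R M M' \<Longrightarrow> R (Lam M) (Lam M')"
  by (auto simp: R_def intro: ccv_ccvJ.intros)
lemma R_App: "R M M' \<Longrightarrow> R N N' \<Longrightarrow> R (App M N) (App M' N')"
  by (auto simp: R_def intro: ccv_ccvJ.intros)
lemma R_Mu: "RJ J J' \<Longrightarrow> R (Mu J) (Mu J')"
  by (auto simp: R_def RJ_def intro: ccv_ccvJ.intros)
lemma RJ_Jmp: "R M M' \<Longrightarrow> RJ (Jmp k M) (Jmp k M')"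
  by (auto simp: R_def RJ_def intro: ccv_ccvJ.intros)
lemma RJ_JWhere: "RJ J J' \<Longrightarrow> R M M' \<Longrightarrow> RJ (JWhere J M) (JWhere J' M')"
  by (auto simp: R_def RJ_def intro: ccv_ccvJ.intros)
lemma R_osh: "R M M' \<Longrightarrow> R (oshift c M) (oshift c M')"
  unfolding R_def by (metis oshs.simps(2))

lemma R_E3: "RJ (Jmp k (Where L M)) (JWhere (Jmp k L) M)"
  by (auto simp: RJ_def intro: ccv_ccvJ.intros)
lemma R_E1J: "RJ (JWhere J (Where L M)) (JWhere (JWhere (oshiftJ (Suc 0) J) L) M)"
  unfolding RJ_def
proof
  fix cs
  show "ccvJ (oshsJ cs (JWhere J (Where L M))) (oshsJ cs (JWhere (JWhere (oshiftJ (Suc 0) J) L) M))"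
    using ccv_ccvJ.E1J[of "oshsJ (map Suc cs) J" "oshs (map Suc cs) L" "oshs cs M"]
    by (simp add: oshsJ_osh1)
qed
lemma R_VN: "is_val V \<Longrightarrow> \<not> is_val N \<Longrightarrow> R (App V N) (Where (App (oshift 0 V) (Var 0)) N)"
  unfolding R_def
  by (auto simp: oshs_osh0 oshs_var0 isval_oshs intro: ccv_ccvJ.r_VN)
lemma R_NM: "\<not> is_val N \<Longrightarrow> R (App N M) (Where (App (Var 0) (oshift 0 M)) N)"
  unfolding R_def
  by (auto simp: oshs_osh0 oshs_var0 isval_oshs intro: ccv_ccvJ.r_NM)
lemma R_muJmp: "R (Mu (Jmp 0 (kshift 0 M))) M"
  unfolding R_def
  by (auto simp: oshs_ksh intro: ccv_ccvJ.r_muJmp)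

lemma R_fill: "R M M' \<Longrightarrow> RJ (fillK K M) (fillK K M')"
  by (cases K) (auto intro: RJ_Jmp RJ_JWhere RJ_refl)

lemma R_W: "RJ (JWhere (fillK (oshK 0 K) L) M) (fillK K (Where L M))"
proof (cases K)
  case (KVar k) thus ?thesis by (auto intro: RJ_sym R_E3)
next
  case (KLam Q)
  have "invQ (oshQ (Suc 0) Q) = oshiftJ (Suc 0) (invQ Q)" by (simp add: inv_osh)
  thus ?thesis using KLam RJ_sym[OF R_E1J[of "invQ Q" L M]] by simp
qed

lemma main:
  "RJ (invQ (cps M K)) (fillK K M)"
  "RJ (invQ (cpsJ J)) J"
  "is_val V \<Longrightarrow> R (invW (star V)) V"
proof (induction M K and J and V rule: cps_cpsJ_star.induct)
  case (1 x K) thus ?case by (simp add: RJ_refl)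
next
  case (2 M K)
  have "invQ (cps (Lam M) K) = fillK K (invW (star (Lam M)))" by simp
  thus ?case using R_fill[OF "2.IH"] by simp
next
  case (3 M1 M2 K)
  show ?case
  proof (cases "is_val M1 \<and> is_val M2")
    case True
    hence "invQ (cps (App M1 M2) K) = fillK K (App (invW (star M1)) (invW (star M2)))" by simp
    thus ?thesis using True "3.IH"(1,2) by (metis R_App R_fill)
  next
    case nv: False
    show ?thesis
    proof (cases "is_val M1")
      case v1: True
      hence nv2: "\<not> is_val M2" using nv by auto
      have e: "invQ (cps (App M1 M2) K) = invQ (cps M2 (KLam (QT (TApp (oshW 0 (star M1)) (WVar 0)) (oshK 0 K))))"
        using v1 nv2 by simp
      have a: "RJ (invQ (cps (App M1 M2) K))
          (JWhere (fillK (oshK 0 K) (App (oshift 0 (invW (star M1))) (Var 0))) M2)"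
        using "3.IH"(4)[OF nv v1] unfolding e by (simp add: inv_osh)
      have b: "RJ (JWhere (fillK (oshK 0 K) (App (oshift 0 (invW (star M1))) (Var 0))) M2)
          (JWhere (fillK (oshK 0 K) (App (oshift 0 M1) (Var 0))) M2)"
        by (intro RJ_JWhere R_fill R_App R_osh R_refl "3.IH"(3)[OF nv v1 v1])
      have c: "RJ (JWhere (fillK (oshK 0 K) (App (oshift 0 M1) (Var 0))) M2)
          (fillK K (Where (App (oshift 0 M1) (Var 0)) M2))" by (rule R_W)
      have d: "RJ (fillK K (Where (App (oshift 0 M1) (Var 0)) M2)) (fillK K (App M1 M2))"
        by (rule R_fill, rule R_sym, rule R_VN[OF v1 nv2])
      show ?thesis using a b c d by (metis RJ_trans)
    next
      case nv1: False
      show ?thesis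
      proof (cases "is_val M2")
        case v2: True
        have e: "invQ (cps (App M1 M2) K) = invQ (cps M1 (KLam (QT (TApp (WVar 0) (oshW 0 (star M2))) (oshK 0 K))))"
          using nv1 v2 by simp
        have a: "RJ (invQ (cps (App M1 M2) K))
            (JWhere (fillK (oshK 0 K) (App (Var 0) (oshift 0 (invW (star M2))))) M1)"
          using "3.IH"(6)[OF nv nv1 v2] unfolding e by (simp add: inv_osh)
        have b: "RJ (JWhere (fillK (oshK 0 K) (App (Var 0) (oshift 0 (invW (star M2))))) M1)
            (JWhere (fillK (oshK 0 K) (App (Var 0) (oshift 0 M2))) M1)"
          by (intro RJ_JWhere R_fill R_App R_osh R_refl "3.IH"(5)[OF nv nv1 v2 v2])
        have c: "RJ (JWhere (fillK (oshK 0 K) (App (Var 0) (oshift 0 M2))) M1)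
            (fillK K (Where (App (Var 0) (oshift 0 M2)) M1))" by (rule R_W)
        have d: "RJ (fillK K (Where (App (Var 0) (oshift 0 M2)) M1)) (fillK K (App M1 M2))"
          by (rule R_fill, rule R_sym, rule R_NM[OF nv1])
        show ?thesis using a b c d by (metis RJ_trans)
      next
        case nv2: False
        define K2 where "K2 = KLam (QT (TApp (WVar 1) (WVar 0)) (oshK 0 (oshK 0 K)))"
        have e: "invQ (cps (App M1 M2) K) = invQ (cps M1 (KLam (cps (oshift 0 M2) K2)))"
          using nv1 nv2 by (simp add: K2_def)
        have a: "RJ (invQ (cps (App M1 M2) K))
            (JWhere (invQ (cps (oshift 0 M2) K2)) M1)"
          using "3.IH"(8)[OF nv nv1 nv2] unfolding e K2_def by simp
        have b: "RJ (JWhere (invQ (cps (oshift 0 M2) K2)) M1)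
            (JWhere (JWhere (fillK (oshK 0 (oshK 0 K)) (App (Var 1) (Var 0))) (oshift 0 M2)) M1)"
          using "3.IH"(7)[OF nv nv1 nv2] unfolding K2_def[symmetric]
          by (intro RJ_JWhere R_refl) (simp add: K2_def)
        have nvs: "\<not> is_val (oshift 0 M2)" using nv2 by (simp add: isval_osh)
        have c1: "RJ (JWhere (fillK (oshK 0 (oshK 0 K)) (App (Var 1) (Var 0))) (oshift 0 M2))
            (fillK (oshK 0 K) (App (Var 0) (oshift 0 M2)))"
        proof -
          have "RJ (JWhere (fillK (oshK 0 (oshK 0 K)) (App (Var 1) (Var 0))) (oshift 0 M2))
              (fillK (oshK 0 K) (Where (App (Var 1) (Var 0)) (oshift 0 M2)))" by (rule R_W)
          moreover have "RJ (fillK (oshK 0 K) (Where (App (Var 1) (Var 0)) (oshift 0 M2)))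
              (fillK (oshK 0 K) (App (Var 0) (oshift 0 M2)))"
            proof (rule R_fill, rule R_sym)
            show "R (App (Var 0) (oshift 0 M2)) (Where (App (Var 1) (Var 0)) (oshift 0 M2))"
              using R_VN[of "Var 0" "oshift 0 M2"] nvs by simp
          qed
          ultimately show ?thesis by (rule RJ_trans)
        qed
        have c: "RJ (JWhere (JWhere (fillK (oshK 0 (oshK 0 K)) (App (Var 1) (Var 0))) (oshift 0 M2)) M1)
            (JWhere (fillK (oshK 0 K) (App (Var 0) (oshift 0 M2))) M1)"
          by (intro RJ_JWhere c1 R_refl)
        have d: "RJ (JWhere (fillK (oshK 0 K) (App (Var 0) (oshift 0 M2))) M1)
            (fillK K (Where (App (Var 0) (oshift 0 M2)) M1))" by (rule R_W)
        have f: "RJ (fillK K (Where (App (Var 0) (oshift 0 M2)) M1)) (fillK K (App M1 M2))"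
          by (rule R_fill, rule R_sym, rule R_NM[OF nv1])
        show ?thesis using a b c d f by (metis RJ_trans)
      qed
    qed
  qed
next
  case (4 L M K)
  have "RJ (invQ (cps (Where L M) K)) (JWhere (invQ (cps L (oshK 0 K))) M)"
    using "4.IH"(2) by simp
  moreover have "RJ (JWhere (invQ (cps L (oshK 0 K))) M) (JWhere (fillK (oshK 0 K) L) M)"
    by (intro RJ_JWhere "4.IH"(1) R_refl)
  ultimately show ?case using R_W RJ_trans by blast
next
  case (5 J K)
  thus ?case by (simp add: R_fill R_Mu)
next
  case (6 k M) thus ?case by simp
next
  case (7 J M)
  have "RJ (invQ (cpsJ (JWhere J M))) (JWhere (invQ (cpsJ J)) M)" using "7.IH"(2) by simp
  thus ?case using "7.IH"(1) by (meson RJ_JWhere RJ_trans R_refl)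
next
  case (8 x) thus ?case by (simp add: R_refl)
next
  case (9 M)
  have "R (invW (star (Lam M))) (Lam (Mu (Jmp 0 (kshift 0 M))))"
    using "9.IH" by (simp add: R_Lam R_Mu)
  thus ?case by (meson R_Lam R_muJmp R_trans)
qed auto

theorem corollary1p26:
  fixes M :: trm
  shows "ccv (invT (cps_top M)) M"
proof -
  have "R (invT (cps_top M)) (Mu (Jmp 0 (kshift 0 M)))"
    using main(1)[of "kshift 0 M" "KVar 0"] by (simp add: cps_top_def R_Mu)
  hence "R (invT (cps_top M)) M" using R_muJmp R_trans by blast
  thus ?thesis unfolding R_def by (metis oshs.simps(1))
qed

end
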